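(* Let $W$ and $A$ be finite sets and $\alpha\colon W\times A\to\Delta_W$ a Markov kernel. Let $f_\alpha\colon\Delta_{W\times A}\to\Delta_{W\times W}$ be the linear map $p(w,a)\mapsto\sum_a p(w,a)\alpha(w'|w,a)$, let $\Xi=\{q\in\Delta_{W\times W}\colon \sum_{w'}q(\cdot,w')=\sum_{w}q(w,\cdot)\}$ be the polytope of joint distributions with equal first and second marginals, and let $J=f_\alpha^{-1}(\Xi)\subseteq\Delta_{W\times A}$. Then each extreme point of $J$ can be written as $p(w,a)=p(w)p(a|w)$, where $p(w)\in\Delta_W$ and $p(a|w)$ is an extreme point of $\Delta_{W,A}$.
   Context: $\Delta_X$ denotes the probability simplex of distributions on a finite set $X$. $\Delta_{W,A}=\prod_{w\in W}\Delta_A$ denotes the polytope of Markov kernels (conditional distributions) $p(a|w)$ from $W$ to $A$; its extreme points are the deterministic kernels $p(a|w)=\delta_{f(w)}(a)$ for functions $f\colon W\to A$. *)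

theory Defs
  imports "HOL-Analysis.Analysis"
begin

definition prob_simplex :: "(real ^ 'x::finite) set" where
  "prob_simplex = {p. (\<forall>x. 0 \<le> p $ x) \<and> (\<Sum>x\<in>UNIV. p $ x) = 1}"

text \<open>Polytope of Markov kernels from W to A; entry k \$ w \$ a is p(a|w).\<close>
definition kernels :: "(real ^ 'a::finite ^ 'w::finite) set" where
  "kernels = {k. \<forall>w. (\<forall>a. 0 \<le> k $ w $ a) \<and> (\<Sum>a\<in>UNIV. k $ w $ a) = 1}"

text \<open>Markov kernel alpha : W x A -> Delta_W, alpha w a w' = alpha(w'|w,a).\<close>
definition markov_kernel :: "('w::finite \<Rightarrow> 'a::finite \<Rightarrow> 'w \<Rightarrow> real) \<Rightarrow> bool" where
  "markov_kernel \<alpha> \<longleftrightarrow> (\<forall>w a. (\<forall>w'. 0 \<le> \<alpha> w a w') \<and> (\<Sum>w'\<in>UNIV. \<alpha> w a w') = 1)"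

definition f_alpha :: "('w::finite \<Rightarrow> 'a::finite \<Rightarrow> 'w \<Rightarrow> real) \<Rightarrow> real ^ ('w \<times> 'a) \<Rightarrow> real ^ ('w \<times> 'w)" where
  "f_alpha \<alpha> p = (\<chi> ww. \<Sum>a\<in>UNIV. p $ (fst ww, a) * \<alpha> (fst ww) a (snd ww))"

definition Xi :: "(real ^ ('w::finite \<times> 'w)) set" where
  "Xi = {q \<in> prob_simplex. \<forall>v. (\<Sum>w'\<in>UNIV. q $ (v, w')) = (\<Sum>w\<in>UNIV. q $ (w, v))}"

definition J :: "('w::finite \<Rightarrow> 'a::finite \<Rightarrow> 'w \<Rightarrow> real) \<Rightarrow> (real ^ ('w \<times> 'a)) set" where
  "J \<alpha> = {p \<in> prob_simplex. f_alpha \<alpha> p \<in> Xi}"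

end

theory Submission
  imports Defs
begin

lemma sum_pairs: "(\<Sum>x\<in>(UNIV::('u::finite \<times> 'v::finite) set). g x) = (\<Sum>u\<in>UNIV. \<Sum>v\<in>UNIV. g (u, v))"
  by (simp add: sum.cartesian_product flip: UNIV_Times_UNIV)

lemma fa_simplex:
  assumes m: "markov_kernel \<alpha>" and q: "q \<in> prob_simplex"
  shows "f_alpha \<alpha> q \<in> prob_simplex"
proof -
  have nn: "\<And>x. 0 \<le> q $ x" and s1: "(\<Sum>x\<in>UNIV. q $ x) = 1" using q by (auto simp: prob_simplex_def)
  have an: "\<And>w a w'. 0 \<le> \<alpha> w a w'" and as: "\<And>w a. (\<Sum>w'\<in>UNIV. \<alpha> w a w') = 1"
    using m by (auto simp: markov_kernel_def)
  have "(\<Sum>x\<in>UNIV. f_alpha \<alpha> q $ x) = (\<Sum>w\<in>UNIV. \<Sum>w'\<in>UNIV. \<Sum>a\<in>UNIV. q $ (w, a) * \<alpha> w a w')"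
    by (simp add: sum_pairs f_alpha_def)
  also have "\<dots> = (\<Sum>w\<in>UNIV. \<Sum>a\<in>UNIV. \<Sum>w'\<in>UNIV. q $ (w, a) * \<alpha> w a w')"
    by (rule sum.cong[OF refl], rule sum.swap)
  also have "\<dots> = (\<Sum>w\<in>UNIV. \<Sum>a\<in>UNIV. q $ (w, a))"
    by (simp add: as flip: sum_distrib_left)
  also have "\<dots> = 1" using s1 by (simp add: sum_pairs)
  finally show ?thesis using nn an
    by (auto simp: prob_simplex_def f_alpha_def intro!: sum_nonneg)
qed

lemma det_extreme:
  fixes g :: "'w::finite \<Rightarrow> 'a::finite"
  shows "(\<chi> w. \<chi> a. if a = g w then (1::real) else 0) extreme_point_of kernels"
proof -
  let ?k = "(\<chi> w. \<chi> a. if a = g w then (1::real) else 0) :: real ^'a^'w"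
  have kk: "?k \<in> kernels" by (auto simp: kernels_def)
  have ns: "?k \<notin> open_segment x y" if x: "x \<in> kernels" and y: "y \<in> kernels" for x y
  proof
    assume "?k \<in> open_segment x y"
    then obtain u where ne: "x \<noteq> y" and u: "0 < u" "u < 1" and ke: "?k = (1 - u) *\<^sub>R x + u *\<^sub>R y"
      by (auto simp: in_segment)
    have comp: "\<And>w a. ?k $ w $ a = (1 - u) * x $ w $ a + u * y $ w $ a"
      using ke by simp
    have xn: "\<And>w a. 0 \<le> x $ w $ a" and xs: "\<And>w. (\<Sum>a\<in>UNIV. x $ w $ a) = 1"
      and yn: "\<And>w a. 0 \<le> y $ w $ a" and ys: "\<And>w. (\<Sum>a\<in>UNIV. y $ w $ a) = 1"
      using x y by (auto simp: kernels_def)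
    have z: "x $ w $ a = ?k $ w $ a \<and> y $ w $ a = ?k $ w $ a" if "a \<noteq> g w" for w a
    proof -
      have "0 = (1 - u) * x $ w $ a + u * y $ w $ a" using comp[of w a] that by simp
      moreover have "0 \<le> (1 - u) * x $ w $ a" "0 \<le> u * y $ w $ a" using u xn yn by auto
      ultimately have "(1 - u) * x $ w $ a = 0" "u * y $ w $ a = 0" by linarith+
      then show ?thesis using u that by auto
    qed
    have o: "x $ w $ a = ?k $ w $ a \<and> y $ w $ a = ?k $ w $ a" for w a
    proof (cases "a = g w")
      case False then show ?thesis using z by blast
    next
      case True
      have "(\<Sum>a\<in>UNIV. x $ w $ a) = x $ w $ g w + (\<Sum>a\<in>UNIV - {g w}. x $ w $ a)"
        by (simp add: sum.remove)
      moreover have "(\<Sum>a\<in>UNIV - {g w}. x $ w $ a) = 0" using z by (intro sum.neutral) auto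
      moreover have "(\<Sum>a\<in>UNIV. y $ w $ a) = y $ w $ g w + (\<Sum>a\<in>UNIV - {g w}. y $ w $ a)"
        by (simp add: sum.remove)
      moreover have "(\<Sum>a\<in>UNIV - {g w}. y $ w $ a) = 0" using z by (intro sum.neutral) auto
      ultimately show ?thesis using True xs[of w] ys[of w] by simp
    qed
    have "x = y" using o by (simp add: vec_eq_iff)
    then show False using ne by simp
  qed
  show ?thesis unfolding extreme_point_of_def using kk ns by blast
qed


definition Gb :: "('w::finite \<Rightarrow> 'a::finite \<Rightarrow> 'w \<Rightarrow> real) \<Rightarrow> real ^ ('w \<times> 'a) \<Rightarrow> 'w \<Rightarrow> real" where
  "Gb \<alpha> d v = (\<Sum>w'\<in>UNIV. \<Sum>a\<in>UNIV. d $ (v, a) * \<alpha> v a w') - (\<Sum>w\<in>UNIV. \<Sum>a\<in>UNIV. d $ (w, a) * \<alpha> w a v)"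

lemma Gb_sum: "(\<Sum>v\<in>UNIV. Gb \<alpha> d v) = 0"
proof -
  have "(\<Sum>v\<in>UNIV. \<Sum>w\<in>UNIV. \<Sum>a\<in>UNIV. d $ (w, a) * \<alpha> w a v)
      = (\<Sum>w\<in>UNIV. \<Sum>v\<in>UNIV. \<Sum>a\<in>UNIV. d $ (w, a) * \<alpha> w a v)"
    by (rule sum.swap)
  then show ?thesis by (simp add: Gb_def sum_subtractf)
qed

lemma Gb_lin: "Gb \<alpha> (p + c *\<^sub>R d) v = Gb \<alpha> p v + c * Gb \<alpha> d v"
  by (simp add: Gb_def sum.distrib sum_distrib_left algebra_simps sum_subtractf)

lemma Gb_linear: "Gb \<alpha> (x - y) v = Gb \<alpha> x v - Gb \<alpha> y v"
  by (simp add: Gb_def sum_subtractf algebra_simps)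

lemma J_iff:
  assumes m: "markov_kernel \<alpha>"
  shows "q \<in> J \<alpha> \<longleftrightarrow> q \<in> prob_simplex \<and> (\<forall>v. Gb \<alpha> q v = 0)"
  using fa_simplex[OF m, of q]
  by (auto simp: J_def Xi_def Gb_def f_alpha_def)


lemma key_inj:
  fixes \<alpha> :: "'w::finite \<Rightarrow> 'a::finite \<Rightarrow> 'w \<Rightarrow> real"
    and p :: "real ^ ('w \<times> 'a)"
  assumes m: "markov_kernel \<alpha>"
    and ext: "p extreme_point_of J \<alpha>"
  shows "inj_on fst {x. 0 < p $ x}"
proof (rule ccontr)
  assume ninj: "\<not> inj_on fst {x. 0 < p $ x}"
  define S where "S = {x. 0 < p $ x}"
  define Wp where "Wp = {w. \<exists>a. 0 < p $ (w, a)}"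
  have pJ: "p \<in> J \<alpha>" using ext by (simp add: extreme_point_of_def)
  then have ps: "p \<in> prob_simplex" and G0: "\<And>v. Gb \<alpha> p v = 0" using J_iff[OF m] by auto
  have pn: "\<And>x. 0 \<le> p $ x" and p1: "(\<Sum>x\<in>UNIV. p $ x) = 1" using ps by (auto simp: prob_simplex_def)
  have an: "\<And>w a w'. 0 \<le> \<alpha> w a w'" using m by (auto simp: markov_kernel_def)
  have fstS: "fst ` S = Wp" by (force simp: S_def Wp_def)
  have cardlt: "card Wp < card S"
  proof -
    have "card (fst ` S) \<le> card S" by (rule card_image_le) simp
    moreover have "card (fst ` S) \<noteq> card S"
      using ninj eq_card_imp_inj_on[of S fst] by (auto simp: S_def)
    ultimately show ?thesis using fstS by simp
  qed
  obtain x0 where x0: "0 < p $ x0"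
  proof -
    have "\<exists>x. 0 < p $ x"
    proof (rule ccontr)
      assume "\<not> (\<exists>x. 0 < p $ x)"
      then have "\<And>x. p $ x = 0" using pn by (metis linorder_not_less order.antisym)
      then show False using p1 by simp
    qed
    then show ?thesis using that by blast
  qed
  define v0 where "v0 = fst x0"
  have v0W: "v0 \<in> Wp" using x0 unfolding v0_def Wp_def by (cases x0) auto
  have azero: "\<alpha> w a v = 0" if "0 < p $ (w, a)" "v \<notin> Wp" for w a v
  proof -
    have pv: "p $ (v, b) = 0" for b
    proof -
      have "\<not> 0 < p $ (v, b)" using that(2) unfolding Wp_def by blast
      then show ?thesis using pn[of "(v, b)"] by linarith
    qed
    have "(\<Sum>w\<in>UNIV. \<Sum>a\<in>UNIV. p $ (w, a) * \<alpha> w a v) = 0"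
      using G0[of v] pv by (simp add: Gb_def)
    then have tot: "(\<Sum>w\<in>UNIV. \<Sum>a\<in>UNIV. p $ (w, a) * \<alpha> w a v) = 0" .
    have nn1: "0 \<le> p $ (w', a') * \<alpha> w' a' v" for w' a' using pn an by simp
    have nn2: "0 \<le> (\<Sum>a\<in>UNIV. p $ (w', a) * \<alpha> w' a v)" for w' using nn1 by (simp add: sum_nonneg)
    have "(\<Sum>a\<in>UNIV. p $ (w, a) * \<alpha> w a v) = 0"
      using sum_nonneg_eq_0_iff[of UNIV "\<lambda>w. \<Sum>a\<in>UNIV. p $ (w, a) * \<alpha> w a v"] tot nn2 by simp
    then have "p $ (w, a) * \<alpha> w a v = 0"
      using sum_nonneg_eq_0_iff[of UNIV "\<lambda>a. p $ (w, a) * \<alpha> w a v"] nn1 by simp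
    then show ?thesis using that(1) by simp
  qed
  define L :: "real ^ ('w \<times> 'a) \<Rightarrow> real ^ 'w" where
    "L d = (\<chi> v. if v = v0 then (\<Sum>x\<in>UNIV. d $ x) else Gb \<alpha> d v)" for d
  have linL: "linear L"
  proof (rule linearI)
    fix x y :: "real ^ ('w \<times> 'a)" and c :: real
    show "L (x + y) = L x + L y"
      using Gb_lin[of \<alpha> x 1 y]
      by (simp add: L_def vec_eq_iff sum.distrib)
    show "L (c *\<^sub>R x) = c *\<^sub>R L x"
      using Gb_lin[of \<alpha> 0 c x]
      by (simp add: L_def vec_eq_iff sum_distrib_left Gb_def)
  qed
  define V where "V = {d :: real ^ ('w \<times> 'a). \<forall>x. x \<notin> S \<longrightarrow> d $ x = 0}"
  define U where "U = {u :: real ^ 'w. \<forall>v. v \<notin> Wp \<longrightarrow> u $ v = 0}"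
  have dimV: "dim V = card S" unfolding V_def dim_vec_eq[symmetric] by (rule dim_substandard_cart)
  have dimU: "dim U = card Wp" unfolding U_def dim_vec_eq[symmetric] by (rule dim_substandard_cart)
  have subV: "subspace V" by (auto simp: V_def subspace_def)
  have LVU: "L ` V \<subseteq> U"
  proof
    fix u assume "u \<in> L ` V"
    then obtain d where d: "d \<in> V" and u: "u = L d" by blast
    show "u \<in> U" unfolding U_def
    proof (intro CollectI allI impI)
      fix v assume v: "v \<notin> Wp"
      then have vv: "v \<noteq> v0" using v0W by auto
      have h1: "\<And>a. d $ (v, a) = 0" using d v unfolding V_def S_def Wp_def by auto
      have h2: "d $ (w, a) * \<alpha> w a v = 0" for w a
      proof (cases "0 < p $ (w, a)")
        case True then show ?thesis using azero[OF True v] by simp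
      next
        case False then have "d $ (w, a) = 0" using d unfolding V_def S_def by blast
        then show ?thesis by simp
      qed
      have "Gb \<alpha> d v = 0" unfolding Gb_def h1 h2 by simp
      then show "u $ v = 0" using u vv by (simp add: L_def)
    qed
  qed
  have "\<not> inj_on L V"
  proof
    assume "inj_on L V"
    then have "dim (L ` V) = dim V" using dim_image_eq[OF linL, of V] subV by (metis span_eq_iff)
    moreover have "dim (L ` V) \<le> dim U" using LVU by (rule dim_subset)
    ultimately show False using dimV dimU cardlt by simp
  qed
  then obtain d1 d2 where d12: "d1 \<in> V" "d2 \<in> V" "d1 \<noteq> d2" "L d1 = L d2"
    unfolding inj_on_def by blast
  define d where "d = d1 - d2"
  have dV: "d \<in> V" using d12 subV unfolding d_def by (simp add: subspace_diff)
  have dnz: "d \<noteq> 0" using d12 by (simp add: d_def)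
  have Ld: "L d = 0" using d12 linear_diff[OF linL, of d1 d2] by (simp add: d_def)
  have sd: "(\<Sum>x\<in>UNIV. d $ x) = 0" using Ld by (simp add: L_def vec_eq_iff) (metis)
  have Gd1: "Gb \<alpha> d v = 0" if "v \<noteq> v0" for v
    using Ld that by (simp add: L_def vec_eq_iff) (metis)
  have Gd: "Gb \<alpha> d v = 0" for v
  proof (cases "v = v0")
    case True
    have "(\<Sum>v\<in>UNIV. Gb \<alpha> d v) = Gb \<alpha> d v0 + (\<Sum>v\<in>UNIV - {v0}. Gb \<alpha> d v)"
      by (simp add: sum.remove)
    moreover have "(\<Sum>v\<in>UNIV - {v0}. Gb \<alpha> d v) = 0" using Gd1 by (intro sum.neutral) auto
    ultimately show ?thesis using True Gb_sum[of \<alpha> d] by simp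
  qed (rule Gd1)
  have finS: "finite S" by simp
  have neS: "S \<noteq> {}" using x0 unfolding S_def by blast
  define e where "e = Min ((\<lambda>x. p $ x / (\<bar>d $ x\<bar> + 1)) ` S)"
  have epos: "0 < e" unfolding e_def using finS neS by (auto simp: S_def)
  have ele: "e * \<bar>d $ x\<bar> \<le> p $ x" if "x \<in> S" for x
  proof -
    have "e \<le> p $ x / (\<bar>d $ x\<bar> + 1)" unfolding e_def using finS that by simp
    then have "e * (\<bar>d $ x\<bar> + 1) \<le> p $ x" by (simp add: pos_le_divide_eq add_pos_nonneg)
    then show ?thesis using epos by (simp add: algebra_simps)
  qed
  have inJ: "p + c *\<^sub>R d \<in> J \<alpha>" if c: "\<bar>c\<bar> \<le> e" for c
  proof -
    have nn: "0 \<le> (p + c *\<^sub>R d) $ x" for x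
    proof (cases "x \<in> S")
      case True
      have "\<bar>c * d $ x\<bar> \<le> e * \<bar>d $ x\<bar>" using c by (simp add: abs_mult mult_right_mono)
      then show ?thesis using ele[OF True] by simp
    next
      case False
      have "d $ x = 0" using dV False unfolding V_def by blast
      then show ?thesis using pn by simp
    qed
    have "(\<Sum>x\<in>UNIV. (p + c *\<^sub>R d) $ x) = 1"
      using p1 sd by (simp add: sum.distrib flip: sum_distrib_left)
    then have "p + c *\<^sub>R d \<in> prob_simplex" using nn by (simp add: prob_simplex_def)
    moreover have "\<forall>v. Gb \<alpha> (p + c *\<^sub>R d) v = 0" by (simp only: Gb_lin G0 Gd) simp
    ultimately show ?thesis using J_iff[OF m] by blast
  qed
  have A: "p + e *\<^sub>R d \<in> J \<alpha>" and B: "p + (- e) *\<^sub>R d \<in> J \<alpha>" using inJ[of e] inJ[of "-e"] epos by auto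
  have neq: "p + e *\<^sub>R d \<noteq> p + (- e) *\<^sub>R d" using epos dnz by (auto simp: vec_eq_iff)
  have "p = midpoint (p + e *\<^sub>R d) (p + (- e) *\<^sub>R d)"
    by (simp add: midpoint_def vec_eq_iff)
  then have "p \<in> open_segment (p + e *\<^sub>R d) (p + (- e) *\<^sub>R d)" using neq midpoint_in_open_segment by metis
  then show False using ext A B unfolding extreme_point_of_def by blast
qed


theorem lemma2:
  fixes \<alpha> :: "'w::finite \<Rightarrow> 'a::finite \<Rightarrow> 'w \<Rightarrow> real"
    and p :: "real ^ ('w \<times> 'a)"
  assumes "markov_kernel \<alpha>"
    and "p extreme_point_of J \<alpha>"
  shows "\<exists>(pw :: real ^ 'w) (k :: real ^ 'a ^ 'w).
           pw \<in> prob_simplex \<and> k extreme_point_of kernels \<and>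
           (\<forall>w a. p $ (w, a) = pw $ w * k $ w $ a)"
proof -
  have inj: "inj_on fst {x. 0 < p $ x}" by (rule key_inj[OF assms])
  have "p \<in> J \<alpha>" using assms(2) by (simp add: extreme_point_of_def)
  then have ps: "p \<in> prob_simplex" by (simp add: J_def)
  have pn: "\<And>x. 0 \<le> p $ x" and p1: "(\<Sum>x\<in>UNIV. p $ x) = 1" using ps by (auto simp: prob_simplex_def)
  define g where "g w = (if \<exists>a. 0 < p $ (w, a) then SOME a. 0 < p $ (w, a) else undefined)" for w
  define pw :: "real ^ 'w" where "pw = (\<chi> w. \<Sum>a\<in>UNIV. p $ (w, a))"
  define k :: "real ^ 'a ^ 'w" where "k = (\<chi> w. \<chi> a. if a = g w then 1 else 0)"
  have pwS: "pw \<in> prob_simplex"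
    using p1 pn by (auto simp: prob_simplex_def pw_def sum_pairs intro!: sum_nonneg)
  have kE: "k extreme_point_of kernels" unfolding k_def by (rule det_extreme)
  have fac: "p $ (w, a) = pw $ w * k $ w $ a" for w a
  proof (cases "\<exists>b. 0 < p $ (w, b)")
    case True
    then have gw: "0 < p $ (w, g w)" unfolding g_def using someI_ex[of "\<lambda>a. 0 < p $ (w, a)"] by simp
    have z: "p $ (w, b) = 0" if "b \<noteq> g w" for b
    proof (rule ccontr)
      assume "p $ (w, b) \<noteq> 0"
      then have "0 < p $ (w, b)" using pn[of "(w, b)"] by linarith
      then have "(w, b) = (w, g w)" using inj gw unfolding inj_on_def by fastforce
      then show False using that by simp
    qed
    have "(\<Sum>b\<in>UNIV. p $ (w, b)) = p $ (w, g w) + (\<Sum>b\<in>UNIV - {g w}. p $ (w, b))"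
      by (simp add: sum.remove)
    moreover have "(\<Sum>b\<in>UNIV - {g w}. p $ (w, b)) = 0" using z by (intro sum.neutral) auto
    ultimately have "pw $ w = p $ (w, g w)" by (simp add: pw_def)
    then show ?thesis using z[of a] by (cases "a = g w") (auto simp: k_def)
  next
    case False
    then have z: "p $ (w, b) = 0" for b using pn[of "(w, b)"] by (meson linorder_not_less order.antisym)
    then show ?thesis by (simp add: pw_def)
  qed
  show ?thesis using pwS kE fac by blast
qed

end
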